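(* Let $n$ be a positive integer and let $\alpha,\beta,\gamma,\delta$ be distinct complex numbers satisfying $(\alpha+\beta)(\gamma+\delta)=2(\alpha\beta+\gamma\delta)$. Then $$\lim_{k\to\alpha}\frac{d^n}{dk^n}\,\frac{(k-\gamma)^n(k-\delta)^n}{(k-\beta)^{n+1}}=\begin{cases}0 & n\text{ odd},\\[4pt] (-1)^{n/2}\dfrac{(\gamma-\delta)^n}{(\alpha-\beta)^{n+1}}\,\prod_{i=1}^{n/2}(2i-1)^2 & n\text{ even}.\end{cases}$$ *)

theory Defs
  imports "HOL-Analysis.Analysis"
begin

end

theory Submission
  imports Defs "HOL-Complex_Analysis.Complex_Analysis"
begin


lemma alg_aux:
  fixes x p s A B N :: complex
  assumes "x \<noteq> 0" "p \<noteq> 0"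
  shows "x * (s * (((A * (-1/x^2)) * (x*p) - B * (N * p)) / ((x*p) * (x*p)))) + N*(s*B/(x*p)) = -s * A/(x*(x*p))"
  using assms by (simp add: field_simps power2_eq_square)

lemma mobius:
  fixes F :: "complex \<Rightarrow> complex"
  assumes F: "F holomorphic_on UNIV" and x: "x \<noteq> 0"
  shows "(deriv ^^ Suc n) (\<lambda>y. y^n * F (1/y)) x = (-1)^Suc n * (deriv ^^ Suc n) F (1/x) / x^(n+2)"
  using x
proof (induction n arbitrary: x)
  case 0
  have d1: "(F has_field_derivative deriv F (1/x)) (at (1/x))"
    using F holomorphic_derivI by blast
  have d2: "((\<lambda>y. 1/y) has_field_derivative -1/x^2) (at x)"
    using 0 by (auto intro!: derivative_eq_intros simp: power2_eq_square field_simps)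
  have "((\<lambda>y. F (1/y)) has_field_derivative deriv F (1/x) * (-1/x^2)) (at x)"
    by (rule DERIV_chain2[OF d1 d2])
  then have "deriv (\<lambda>y. F (1/y)) x = deriv F (1/x) * (-1/x^2)" by (rule DERIV_imp_deriv)
  then show ?case by (simp add: power2_eq_square)
next
  case (Suc n)
  define S where "S = - {0::complex}"
  have S: "open S" "x \<in> S" using Suc.prems by (auto simp: S_def)
  define G where "G = (\<lambda>y. y^n * F (1/y))"
  have hF: "(\<lambda>y. F (1/y)) holomorphic_on S"
  proof -
    have "(\<lambda>y::complex. 1/y) holomorphic_on S" unfolding S_def by (intro holomorphic_intros) auto
    moreover have "F holomorphic_on (\<lambda>y. 1/y) ` S" using F holomorphic_on_subset by blast
    ultimately show ?thesis using holomorphic_on_compose[of "\<lambda>y. 1/y" S F] by (simp add: o_def)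
  qed
  have hG: "G holomorphic_on S" unfolding G_def
    by (rule holomorphic_on_mult[OF _ hF]) (simp add: holomorphic_on_power holomorphic_on_id)
  define F1 where "F1 = (deriv ^^ Suc n) F"
  define F2 where "F2 = (deriv ^^ Suc (Suc n)) F"
  have dF1: "\<And>z. (F1 has_field_derivative F2 (z)) (at z)"
    unfolding F1_def F2_def using has_field_derivative_higher_deriv[OF F open_UNIV UNIV_I, of "Suc n"] by simp
  have IH: "(deriv ^^ Suc n) G y = (-1)^Suc n * F1 (1/y) / y^(n+2)" if "y \<noteq> 0" for y
    unfolding G_def F1_def by (rule Suc.IH[OF that])
  have e1: "(deriv ^^ Suc (Suc n)) G x = deriv (\<lambda>y. (-1)^Suc n * F1 (1/y) / y^(n+2)) x"
  proof -
    have "(deriv ^^ Suc (Suc n)) G x = deriv ((deriv ^^ Suc n) G) x" by simp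
    also have "\<dots> = deriv (\<lambda>y. (-1)^Suc n * F1 (1/y) / y^(n+2)) x"
    proof (rule deriv_cong_ev[OF _ refl])
      show "\<forall>\<^sub>F y in nhds x. (deriv ^^ Suc n) G y = (-1)^Suc n * F1 (1/y) / y^(n+2)"
        using t1_space_nhds[OF Suc.prems] by eventually_elim (rule IH)
    qed
    finally show ?thesis .
  qed
  have d2: "((\<lambda>y. 1/y) has_field_derivative -1/x^2) (at x)"
    using Suc.prems by (auto intro!: derivative_eq_intros simp: power2_eq_square field_simps)
  have d3: "((\<lambda>y. F1 (1/y)) has_field_derivative F2 (1/x) * (-1/x^2)) (at x)"
    by (rule DERIV_chain2[OF dF1 d2])
  have d5: "((\<lambda>y. y^(n+2)) has_field_derivative of_nat (n+2) * x^(n+2-1)) (at x)"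
    by (rule derivative_eq_intros refl)+ simp
  have d6: "((\<lambda>y. F1 (1/y) / y^(n+2)) has_field_derivative
      ((F2 (1/x) * (-1/x^2)) * x^(n+2) - F1 (1/x) * (of_nat (n+2) * x^(n+2-1))) / (x^(n+2) * x^(n+2))) (at x)"
    by (rule DERIV_divide[OF d3 d5]) (use Suc.prems in simp)
  have d4: "((\<lambda>y. (-1)^Suc n * (F1 (1/y) / y^(n+2))) has_field_derivative
      (-1)^Suc n * (((F2 (1/x) * (-1/x^2)) * x^(n+2) - F1 (1/x) * (of_nat (n+2) * x^(n+2-1))) / (x^(n+2) * x^(n+2)))) (at x)"
    by (rule DERIV_cmult[OF d6])
  have e2: "(deriv ^^ Suc (Suc n)) G x = (-1)^Suc n * (((F2 (1/x) * (-1/x^2)) * x^(n+2) - F1 (1/x) * (of_nat (n+2) * x^(n+1))) / (x^(n+2) * x^(n+2)))"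
    using e1 DERIV_imp_deriv[OF d4] by simp
  have "(deriv ^^ Suc (Suc n)) (\<lambda>y. y * G y) x =
     (\<Sum>i = 0..Suc (Suc n). of_nat (Suc (Suc n) choose i) * (deriv ^^ i) (\<lambda>y. y) x * (deriv ^^ (Suc (Suc n)-i)) G x)"
    by (rule higher_deriv_mult[OF _ hG S]) (auto intro: holomorphic_intros)
  also have "\<dots> = x * (deriv ^^ Suc (Suc n)) G x + of_nat (Suc (Suc n)) * (deriv ^^ Suc n) G x"
    by (simp add: sum.atLeast_Suc_atMost)
  finally have e3: "(deriv ^^ Suc (Suc n)) (\<lambda>y. y * G y) x = x * (deriv ^^ Suc (Suc n)) G x + of_nat (Suc (Suc n)) * (deriv ^^ Suc n) G x" .
  have eq: "(\<lambda>y. y^(Suc n) * F (1/y)) = (\<lambda>y. y * G y)" by (auto simp: G_def)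
  have p: "x^(n+1) \<noteq> 0" using Suc.prems by simp
  have h: "x^(n+2) = x * x^(n+1)" "x^(Suc n + 2) = x * (x * x^(n+1))" "n+2-1 = n+1" by simp_all
  have "(deriv ^^ Suc (Suc n)) (\<lambda>y. y^(Suc n) * F (1/y)) x = (deriv ^^ Suc (Suc n)) (\<lambda>y. y * G y) x"
    by (simp only: eq)
  also have "\<dots> = x * ((-1)^Suc n * (((F2 (1/x) * (-1/x^2)) * (x * x^(n+1)) - F1 (1/x) * (of_nat (Suc (Suc n)) * x^(n+1))) / ((x * x^(n+1)) * (x * x^(n+1)))))
      + of_nat (Suc (Suc n)) * ((-1)^Suc n * F1 (1/x) / (x * x^(n+1)))"
    unfolding e3 e2 IH[OF Suc.prems] h by simp
  also have "\<dots> = - ((-1)^Suc n) * F2 (1/x) / (x * (x * x^(n+1)))"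
    by (rule alg_aux[OF Suc.prems p])
  also have "\<dots> = (-1)^Suc (Suc n) * (deriv ^^ Suc (Suc n)) F (1/x) / x^(Suc n + 2)"
    unfolding h F2_def by simp
  finally show ?case .
qed



lemma hd_sum:
  fixes K :: "nat \<Rightarrow> complex" and p :: "nat \<Rightarrow> nat"
  assumes "finite A"
  shows "(deriv ^^ j) (\<lambda>u. \<Sum>k\<in>A. K k * (u - z)^(p k)) w = (\<Sum>k\<in>A. K k * (deriv ^^ j) (\<lambda>u. (u - z)^(p k)) w)"
  using assms
proof (induction A rule: finite_induct)
  case empty
  then show ?case by simp
next
  case (insert x A)
  have "(deriv ^^ j) (\<lambda>u. \<Sum>k\<in>insert x A. K k * (u - z)^(p k)) w =
        (deriv ^^ j) (\<lambda>u. K x * (u - z)^(p x) + (\<Sum>k\<in>A. K k * (u - z)^(p k))) w"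
    using insert by simp
  also have "\<dots> = (deriv ^^ j) (\<lambda>u. K x * (u - z)^(p x)) w + (deriv ^^ j) (\<lambda>u. \<Sum>k\<in>A. K k * (u - z)^(p k)) w"
    by (rule higher_deriv_add[of _ UNIV]) (auto intro!: holomorphic_on_sum holomorphic_on_mult holomorphic_on_power holomorphic_on_diff holomorphic_on_const holomorphic_on_id)
  also have "(deriv ^^ j) (\<lambda>u. K x * (u - z)^(p x)) w = K x * (deriv ^^ j) (\<lambda>u. (u - z)^(p x)) w"
    by (rule higher_deriv_cmult[of _ UNIV]) (auto intro!: holomorphic_on_power holomorphic_on_diff holomorphic_on_const holomorphic_on_id)
  finally show ?case using insert by simp
qed

lemma fact_double: "fact (2*k) = (2::nat)^k * fact k * (\<Prod>i=1..k. 2*i-1)"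
proof (induction k)
  case 0
  then show ?case by simp
next
  case (Suc k)
  have "fact (2 * Suc k) = (2*k+2) * (2*k+1) * (fact (2*k) :: nat)"
    by (simp add: algebra_simps)
  also have "\<dots> = 2^Suc k * fact (Suc k) * ((\<Prod>i=1..k. 2*i-1) * (2 * Suc k - 1))"
    unfolding Suc by (simp add: algebra_simps)
  also have "(\<Prod>i=1..k. 2*i-1) * (2 * Suc k - 1) = (\<Prod>i=1..Suc k. 2*i-1)"
    by (simp add: prod.nat_ivl_Suc')
  finally show ?case .
qed

lemma binom_fact: "(2*k choose k) * fact (2*k) = (4::nat)^k * (\<Prod>i=1..k. 2*i-1)^2"
proof -
  have b: "fact k * fact (2*k - k) * (2*k choose k) = (fact (2*k) :: nat)"
    by (rule binomial_fact_lemma) simp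
  have "fact k * fact k * ((2*k choose k) * fact (2*k)) = fact (2*k) * (fact (2*k) :: nat)"
    using b by (simp add: mult_2)
  also have "\<dots> = fact k * fact k * ((4::nat)^k * (\<Prod>i=1..k. 2*i-1)^2)"
    unfolding fact_double by (simp add: power2_eq_square power_mult_distrib algebra_simps flip: power_mult_distrib)
  finally show ?thesis by simp
qed



lemma term_eval:
  assumes "n \<ge> 1"
  shows "pochhammer (of_nat (Suc (2*k) - n)) n * (0::complex)^(2*k-n) = (if 2*k = n then fact n else 0)"
proof (cases "2*k = n")
  case True
  then show ?thesis by (simp add: pochhammer_fact)
next
  case False
  show ?thesis
  proof (cases "2*k < n")
    case True
    then have "Suc (2*k) - n = 0" by simp
    then show ?thesis using False assms by (simp add: pochhammer_0_left)
  next
    case False2: False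
    then show ?thesis using False by simp
  qed
qed

theorem theorem7:
  fixes n :: nat and \<alpha> \<beta> \<gamma> \<delta> :: complex
  assumes "n \<ge> 1"
    and "distinct [\<alpha>, \<beta>, \<gamma>, \<delta>]"
    and "(\<alpha> + \<beta>) * (\<gamma> + \<delta>) = 2 * (\<alpha> * \<beta> + \<gamma> * \<delta>)"
  shows "((\<lambda>k. (deriv ^^ n) (\<lambda>z. (z - \<gamma>) ^ n * (z - \<delta>) ^ n / (z - \<beta>) ^ (n + 1)) k)
           \<longlongrightarrow>
           (if odd n then 0
            else (-1) ^ (n div 2) * (\<gamma> - \<delta>) ^ n / (\<alpha> - \<beta>) ^ (n + 1)
                 * (\<Prod>i=1..n div 2. (2 * of_nat i - 1) ^ 2))) (at \<alpha>)"
proof -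
  obtain m where n: "n = Suc m" using assms(1) by (cases n) auto
  define a where "a = \<alpha> - \<beta>"
  define c where "c = \<gamma> - \<beta>"
  define d where "d = \<delta> - \<beta>"
  have a0: "a \<noteq> 0" and c0: "c \<noteq> 0" and d0: "d \<noteq> 0" and cd: "c \<noteq> d"
    using assms(2) by (auto simp: a_def c_def d_def)
  have cond: "a * (c + d) = 2 * c * d"
    using assms(3) unfolding a_def c_def d_def by algebra
  define f where "f = (\<lambda>z. (z - \<gamma>) ^ n * (z - \<delta>) ^ n / (z - \<beta>) ^ (n + 1))"
  define \<phi> where "\<phi> = (\<lambda>v. (v - c) ^ n * (v - d) ^ n / v ^ (n + 1))"
  have f\<phi>: "f = (\<lambda>w. \<phi> (1 * w + (- \<beta>)))"
    by (simp add: f_def \<phi>_def c_def d_def fun_eq_iff)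
  have h\<phi>: "\<phi> holomorphic_on (- {0})"
    unfolding \<phi>_def by (auto intro!: holomorphic_on_divide holomorphic_on_mult holomorphic_on_power holomorphic_on_diff holomorphic_on_const holomorphic_on_id)
  have hf: "f holomorphic_on (- {\<beta>})"
    unfolding f_def by (auto intro!: holomorphic_on_divide holomorphic_on_mult holomorphic_on_power holomorphic_on_diff holomorphic_on_const holomorphic_on_id)
  define g where "g = (deriv ^^ n) f"
  have hg: "g holomorphic_on (- {\<beta>})" unfolding g_def
    by (rule holomorphic_higher_deriv[OF hf]) auto
  have lim: "(g \<longlongrightarrow> g \<alpha>) (at \<alpha>)"
  proof -
    have "continuous_on (- {\<beta>}) g" using hg by (rule holomorphic_on_imp_continuous_on)
    moreover have "open (- {\<beta>})" by auto
    ultimately have "isCont g \<alpha>" using assms(2) continuous_on_eq_continuous_at by auto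
    then show ?thesis by (rule isContD)
  qed
  have g\<alpha>: "g \<alpha> = (deriv ^^ n) \<phi> a"
    unfolding g_def f\<phi>
  proof -
    have o: "open (- {\<beta>})" "open (- {0::complex})" by auto
    show "(deriv ^^ n) (\<lambda>w. \<phi> (1 * w + - \<beta>)) \<alpha> = (deriv ^^ n) \<phi> a"
      using higher_deriv_compose_linear'[OF h\<phi> o(1) o(2), of \<alpha> 1 "- \<beta>" n] assms(2)
      by (simp add: a_def)
  qed
  define F where "F = (\<lambda>u::complex. (1 - c*u)^n * (1 - d*u)^n)"
  have hF: "F holomorphic_on UNIV" unfolding F_def
    by (auto intro!: holomorphic_on_mult holomorphic_on_power holomorphic_on_diff holomorphic_on_const holomorphic_on_id)
  have \<phi>F: "\<phi> v = v^m * F (1/v)" if "v \<noteq> 0" for v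
  proof -
    have pw: "v^(n+1) * v^m = v^n * v^n" unfolding n power_add[symmetric] by simp
    have "v^m * F (1/v) = v^m * ((v-c)/v)^n * ((v-d)/v)^n"
      unfolding F_def using that by (simp add: field_simps)
    also have "\<dots> = (v - c) ^ n * (v - d) ^ n / v ^ (n + 1)"
      using that pw by (simp add: power_divide field_simps)
    finally show ?thesis unfolding \<phi>_def by simp
  qed
  have e1: "(deriv ^^ n) \<phi> a = (deriv ^^ Suc m) (\<lambda>v. v^m * F (1/v)) a"
    unfolding n[symmetric]
  proof (rule higher_deriv_cong_ev[OF _ refl])
    show "\<forall>\<^sub>F x in nhds a. \<phi> x = x ^ m * F (1 / x)"
      using t1_space_nhds[OF a0] by eventually_elim (rule \<phi>F)
  qed
  have e2: "(deriv ^^ Suc m) (\<lambda>v. v^m * F (1/v)) a = (-1)^n * (deriv ^^ n) F (1/a) / a^(n+1)"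
    using mobius[OF hF a0, of m] n by simp
  define h where "h = (1/c - 1/d) / 2"
  define K where "K = (\<lambda>k. (c*d)^n * of_nat (n choose k) * (-(h^2))^(n-k))"
  have ia: "1/a = (1/c + 1/d) / 2" using cond a0 c0 d0 by (simp add: field_simps)
  have quad: "(1 - c*u) * (1 - d*u) = c*d*((u - 1/a)^2 + -(h^2))" for u
    unfolding ia h_def using c0 d0 by (simp add: field_simps power2_eq_square)
  have Fexp: "F = (\<lambda>u. \<Sum>k\<le>n. K k * (u - 1/a)^(2*k))"
  proof
    fix u
    have "F u = (c*d)^n * ((u - 1/a)^2 + -(h^2))^n"
      unfolding F_def power_mult_distrib[symmetric] quad by (simp add: power_mult_distrib)
    also have "\<dots> = (\<Sum>k\<le>n. K k * (u - 1/a)^(2*k))"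
    proof -
      have pm: "((u-1/a)^2)^k = (u-1/a)^(2*k)" for k by (simp add: power_mult)
      show ?thesis unfolding binomial_ring K_def sum_distrib_left
        by (rule sum.cong[OF refl]) (simp only: pm mult_ac)
    qed
    finally show "F u = (\<Sum>k\<le>n. K k * (u - 1/a)^(2*k))" .
  qed
  have e3: "(deriv ^^ n) F (1/a) = (if even n then K (n div 2) * fact n else 0)"
  proof -
    have "(deriv ^^ n) F (1/a) = (\<Sum>k\<le>n. K k * (deriv ^^ n) (\<lambda>u. (u - 1/a)^(2*k)) (1/a))"
      unfolding Fexp by (rule hd_sum) simp
    also have "\<dots> = (\<Sum>k\<le>n. (if 2*k = n then K k * fact n else 0))"
      by (rule sum.cong[OF refl]) (simp add: higher_deriv_power term_eval[OF assms(1)])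
    also have "\<dots> = (if even n then K (n div 2) * fact n else 0)"
    proof (cases "even n")
      case True
      have "(\<Sum>k\<le>n. (if 2*k = n then K k * fact n else 0)) = (\<Sum>k\<le>n. (if k = n div 2 then K k * fact n else 0))"
        using True by (intro sum.cong refl) auto
      also have "\<dots> = K (n div 2) * fact n" by (simp add: sum.delta)
      finally show ?thesis using True by simp
    next
      case False
      then show ?thesis by (auto intro!: sum.neutral)
    qed
    finally show ?thesis .
  qed
  have val: "g \<alpha> = (if odd n then 0
            else (-1) ^ (n div 2) * (\<gamma> - \<delta>) ^ n / (\<alpha> - \<beta>) ^ (n + 1)
                 * (\<Prod>i=1..n div 2. (2 * of_nat i - 1) ^ 2))"
  proof -
    have gval: "g \<alpha> = (-1)^n * (if even n then K (n div 2) * fact n else 0) / a^(n+1)"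
      using g\<alpha> e1 e2 e3 by simp
    show ?thesis
    proof (cases "even n")
      case False
      then show ?thesis using gval by simp
    next
      case True
      then obtain j where j: "n = 2*j" by blast
      define P where "P = (\<Prod>i=1..j. 2*i-1::nat)"
      have hh: "c*d*h = (d-c)/2" unfolding h_def using c0 d0 by (simp add: field_simps)
      have PP: "of_nat P = (\<Prod>i=1..j. 2 * of_nat i - 1 :: complex)"
        unfolding P_def of_nat_prod by (rule prod.cong) (auto simp: of_nat_diff)
      have P2: "(\<Prod>i=1..j. (2 * of_nat i - 1)^2) = (\<Prod>i=1..j. 2 * of_nat i - 1 :: complex)^2"
        by (simp add: prod_power_distrib)
      have BF: "of_nat (2*j choose j) * fact (2*j) = (4::complex)^j * (of_nat P)^2"
        using arg_cong[OF binom_fact[of j], of "of_nat :: nat \<Rightarrow> complex"] unfolding P_def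
        by (simp add: of_nat_fact)
      have Y: "(c*d)^2 * (-(h^2)) * 4 = -((c-d)^2)"
      proof -
        have "(c*d)^2 * (-(h^2)) * 4 = -((2*(c*d*h))^2)" by (simp add: power2_eq_square algebra_simps)
        also have "\<dots> = -((c-d)^2)" unfolding hh by (simp add: power2_eq_square field_simps)
        finally show ?thesis .
      qed
      have X: "(c*d)^(2*j) * (-(h^2))^j * 4^j = (-1)^j * (c-d)^(2*j)"
      proof -
        have "(c*d)^(2*j) * (-(h^2))^j * 4^j = ((c*d)^2 * (-(h^2)) * 4)^j"
          unfolding power_mult power_mult_distrib[of "(c*d)^2 * (-(h^2))" 4 j] power_mult_distrib[of "(c*d)^2" "-(h^2)" j] ..
        also have "\<dots> = (-1)^j * (c-d)^(2*j)" unfolding Y power_minus[of "(c-d)^2" j] power_mult ..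
        finally show ?thesis .
      qed
      have KF: "K j * fact n = (-1)^j * (c-d)^n * (of_nat P)^2"
      proof -
        have "K j * fact n = (c*d)^(2*j) * (-(h^2))^j * (of_nat (2*j choose j) * fact (2*j))"
          unfolding K_def j by simp
        also have "\<dots> = ((c*d)^(2*j) * (-(h^2))^j * 4^j) * (of_nat P)^2"
          unfolding BF by simp
        also have "\<dots> = (-1)^j * (c-d)^n * (of_nat P)^2" unfolding X j by simp
        finally show ?thesis .
      qed
      have cdd: "c - d = \<gamma> - \<delta>" unfolding c_def d_def by simp
      have g2: "g \<alpha> = (-1)^n * ((-1)^j * (c-d)^n * (of_nat P)^2) / a^(n+1)"
        using gval True KF j by simp
      show ?thesis
      proof -
        have "(\<Prod>i=1..n div 2. (2 * of_nat i - 1)^2) = (of_nat P :: complex)^2"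
          using P2 PP by (simp add: j)
        then show ?thesis unfolding g2 cdd a_def using True by (simp add: j)
      qed
    qed
  qed
  show ?thesis using lim val unfolding g_def f_def by simp
qed

end
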